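(* For every time horizon $T\in\mathbb N$, every algorithm for the two-bit feedback brokerage problem satisfies \[\sup_\nu R_T^\nu\ge\frac T9,\] where the supremum is over all probability distributions $\nu$ on $[0,1]$.
   Context: Brokerage setting: for $p,v_1,v_2\in[0,1]$ let $\mathrm{gft}(p,v_1,v_2):=(v_1\vee v_2-v_1\wedge v_2)\,\mathbb I\{v_1\wedge v_2\le p\le v_1\vee v_2\}$ ($\vee,\wedge$ = max, min). Valuations $V_1,V_2,\dots$ are i.i.d. with law $\nu$ on $[0,1]$; at round $t$ the algorithm posts $P_t\in[0,1]$ and obtains $\mathrm{GFT}_t(P_t)$ with $\mathrm{GFT}_t(q):=\mathrm{gft}(q,V_{2t-1},V_{2t})$. A two-bit feedback algorithm chooses $P_t$ as a function of the bits $\mathbb I\{P_s\le V_{2s-1}\},\mathbb I\{P_s\le V_{2s}\}$, $s<t$ (and possibly of internal randomness independent of the valuations). $R_T^\nu:=\sup_{p\in[0,1]}\mathbb E[\sum_{t=1}^T\mathrm{GFT}_t(p)]-\mathbb E[\sum_{t=1}^T\mathrm{GFT}_t(P_t)]$ when valuations have law $\nu$. *)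

theory Defs
  imports "HOL-Probability.Probability"
begin

definition gft :: "real \<Rightarrow> real \<Rightarrow> real \<Rightarrow> real" where
  "gft p v1 v2 = (if min v1 v2 \<le> p \<and> p \<le> max v1 v2 then max v1 v2 - min v1 v2 else 0)"

text \<open>Valuations are indexed from 0: round s (0-based, s < T) uses v (2s) and v (2s+1),
  i.e. V_{2t-1}, V_{2t} with t = s+1.  A (possibly randomised) two-bit feedback algorithm is
  a map alg :: 'w => (bool x bool) list => real: given the internal randomness w and the list
  of feedback bit pairs of the previous rounds, it posts a price.\<close>

fun hist :: "('w \<Rightarrow> (bool \<times> bool) list \<Rightarrow> real) \<Rightarrow> 'w \<Rightarrow> (nat \<Rightarrow> real) \<Rightarrow> nat \<Rightarrow> (bool \<times> bool) list" where
  "hist alg w v 0 = []"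
| "hist alg w v (Suc s) =
     (let p = alg w (hist alg w v s) in hist alg w v s @ [(p \<le> v (2 * s), p \<le> v (2 * s + 1))])"

definition price :: "('w \<Rightarrow> (bool \<times> bool) list \<Rightarrow> real) \<Rightarrow> 'w \<Rightarrow> (nat \<Rightarrow> real) \<Rightarrow> nat \<Rightarrow> real" where
  "price alg w v s = alg w (hist alg w v s)"

definition vals :: "nat \<Rightarrow> real measure \<Rightarrow> (nat \<Rightarrow> real) measure" where
  "vals T \<nu> = PiM {..<2 * T} (\<lambda>_. \<nu>)"

definition fixed_reward :: "nat \<Rightarrow> real measure \<Rightarrow> real \<Rightarrow> real" where
  "fixed_reward T \<nu> p = (\<integral>v. (\<Sum>s<T. gft p (v (2 * s)) (v (2 * s + 1))) \<partial>vals T \<nu>)"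

definition alg_reward :: "nat \<Rightarrow> real measure \<Rightarrow> 'w measure \<Rightarrow> ('w \<Rightarrow> (bool \<times> bool) list \<Rightarrow> real) \<Rightarrow> real" where
  "alg_reward T \<nu> \<Omega> alg =
     (\<integral>wv. (\<Sum>s<T. gft (price alg (fst wv) (snd wv) s) (snd wv (2 * s)) (snd wv (2 * s + 1)))
        \<partial>(\<Omega> \<Otimes>\<^sub>M vals T \<nu>))"

text \<open>Regret R_T^nu (as an extended real, so that the supremum is unconditionally meaningful).\<close>
definition regret :: "nat \<Rightarrow> real measure \<Rightarrow> 'w measure \<Rightarrow> ('w \<Rightarrow> (bool \<times> bool) list \<Rightarrow> real) \<Rightarrow> ereal" where
  "regret T \<nu> \<Omega> alg = (SUP p\<in>{0..1}. ereal (fixed_reward T \<nu> p)) - ereal (alg_reward T \<nu> \<Omega> alg)"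

definition dists01 :: "real measure set" where
  "dists01 = {\<nu>. prob_space \<nu> \<and> sets \<nu> = sets borel \<and> measure \<nu> {0..1} = 1}"

end

theory Submission imports Defs begin

lemma gft_measurable[measurable]:
  assumes [measurable]: "f \<in> borel_measurable N" "g \<in> borel_measurable N" "k \<in> borel_measurable N"
  shows "(\<lambda>x. gft (f x) (g x) (k x)) \<in> borel_measurable N"
  unfolding gft_def by measurable

lemma gft_bound: "y \<in> {0..1} \<Longrightarrow> z \<in> {0..1} \<Longrightarrow> gft p y z \<in> {0..1}"
  unfolding gft_def by auto

lemma prob_int_01:
  fixes f :: "'a \<Rightarrow> real"
  assumes "prob_space M" "AE x in M. f x \<in> {0..1}"
  shows "(\<integral>x. f x \<partial>M) \<in> {0..1}"
proof (cases "integrable M f")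
  case True
  interpret prob_space M by fact
  have "0 \<le> (\<integral>x. f x \<partial>M)" using assms(2) by (intro integral_nonneg_AE) auto
  moreover have "(\<integral>x. f x \<partial>M) \<le> (\<integral>x. 1 \<partial>M)"
    using assms(2) True by (intro integral_mono_AE) auto
  ultimately show ?thesis by (simp add: prob_space)
next
  case False then show ?thesis by (simp add: not_integrable_integral_eq)
qed

lemma prob_int_le:
  fixes f :: "'a \<Rightarrow> real"
  assumes "prob_space M" "AE x in M. f x \<le> B" "integrable M f"
  shows "(\<integral>x. f x \<partial>M) \<le> B"
proof -
  interpret prob_space M by fact
  have "(\<integral>x. f x \<partial>M) \<le> (\<integral>x. B \<partial>M)"
    using assms by (intro integral_mono_AE) auto
  then show ?thesis by (simp add: prob_space)
qed

lemma indep_round: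
  fixes M :: "real measure" and P :: "(nat \<Rightarrow> real) \<Rightarrow> real"
  assumes M: "prob_space M" "sets M = sets borel" "AE x in M. x \<in> {0..1}"
   and I: "finite I" "a \<in> I" "b \<in> I" "a \<noteq> b"
   and Pm: "\<And>K. I - {a,b} \<subseteq> K \<Longrightarrow> K \<subseteq> I \<Longrightarrow> P \<in> borel_measurable (PiM K (\<lambda>_. M))"
   and Pa: "\<And>x y. P (x(a:=y)) = P x" and Pb: "\<And>x y. P (x(b:=y)) = P x"
  shows "(\<integral>v. gft (P v) (v a) (v b) \<partial>PiM I (\<lambda>_. M))
     = (\<integral>v. (\<integral>z. (\<integral>y. gft (P v) y z \<partial>M) \<partial>M) \<partial>PiM (I - {a,b}) (\<lambda>_. M))"
proof -
  interpret Mp: prob_space M by fact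
  interpret product_sigma_finite "\<lambda>_. M" by unfold_locales
  define K where "K = I - {a}"
  define J where "J = I - {a,b}"
  have IK: "I = insert a K" "a \<notin> K" "finite K" using I by (auto simp: K_def)
  have KJ: "K = insert b J" "b \<notin> J" "finite J" using I by (auto simp: K_def J_def)
  have measI[measurable]: "P \<in> borel_measurable (PiM I (\<lambda>_. M))" by (rule Pm) auto
  have measK[measurable]: "P \<in> borel_measurable (PiM K (\<lambda>_. M))" unfolding K_def by (rule Pm) auto
  have measJ[measurable]: "P \<in> borel_measurable (PiM J (\<lambda>_. M))" unfolding J_def by (rule Pm) auto
  have compm: "(\<lambda>x. x j) \<in> borel_measurable (PiM L (\<lambda>_. M))" if "j \<in> L" for j L
  proof -
    have "(\<lambda>x. x j) \<in> PiM L (\<lambda>_. M) \<rightarrow>\<^sub>M M" using that by (rule measurable_component_singleton)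
    then show ?thesis by (simp add: measurable_cong_sets[OF refl M(2)])
  qed
  have psI: "prob_space (PiM I (\<lambda>_. M))" "prob_space (PiM K (\<lambda>_. M))"
    by (auto intro!: prob_space_PiM M)
  have AEI: "AE v in PiM I (\<lambda>_. M). v a \<in> {0..1} \<and> v b \<in> {0..1}"
    using I by (intro AE_conjI AE_PiM_component M) auto
  have AEK: "AE v in PiM K (\<lambda>_. M). v b \<in> {0..1}"
    using KJ by (intro AE_PiM_component M) auto
  have intI: "integrable (PiM I (\<lambda>_. M)) (\<lambda>v. gft (P v) (v a) (v b))"
  proof -
    interpret prob_space "PiM I (\<lambda>_. M)" by (fact psI)
    show ?thesis
      apply (rule integrable_const_bound[where B=1])
      using AEI apply eventually_elim
      using gft_bound apply fastforce
      using I by (intro gft_measurable measI compm) auto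
  qed
  define H where "H p z = (\<integral>y. gft p y z \<partial>M)" for p z
  have H01: "z \<in> {0..1} \<Longrightarrow> H p z \<in> {0..1}" for p z
    unfolding H_def
    by (intro prob_int_01 M(1) eventually_mono[OF M(3)] gft_bound) auto
  have "(\<integral>v. gft (P v) (v a) (v b) \<partial>PiM I (\<lambda>_. M)) =
     (\<integral>x. (\<integral>y. gft (P (x(a:=y))) ((x(a:=y)) a) ((x(a:=y)) b) \<partial>M) \<partial>PiM K (\<lambda>_. M))"
    using product_integral_insert[OF IK(3,2), of "\<lambda>v. gft (P v) (v a) (v b)"] intI IK(1) by simp
  also have "\<dots> = (\<integral>x. H (P x) (x b) \<partial>PiM K (\<lambda>_. M))"
    using I by (simp add: Pa H_def)
  also have "\<dots> = (\<integral>x. (\<integral>z. H (P (x(b:=z))) ((x(b:=z)) b) \<partial>M) \<partial>PiM J (\<lambda>_. M))"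
  proof -
    have intK: "integrable (PiM K (\<lambda>_. M)) (\<lambda>x. H (P x) (x b))"
    proof -
      interpret prob_space "PiM K (\<lambda>_. M)" by (fact psI)
      have [measurable]: "(\<lambda>x. H (P x) (x b)) \<in> borel_measurable (PiM K (\<lambda>_. M))"
        unfolding H_def
        apply (rule Mp.borel_measurable_lebesgue_integral[where f="\<lambda>x y. gft (P x) y (x b)", simplified])
      proof (unfold case_prod_beta, rule gft_measurable)
        show "(\<lambda>x. P (fst x)) \<in> borel_measurable (PiM K (\<lambda>_. M) \<Otimes>\<^sub>M M)" by measurable
        show "snd \<in> borel_measurable (PiM K (\<lambda>_. M) \<Otimes>\<^sub>M M)" using measurable_snd[of "PiM K (\<lambda>_. M)" M] by (simp add: measurable_cong_sets[OF refl M(2)])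
        have "(\<lambda>x. x b) \<in> borel_measurable (PiM K (\<lambda>_. M))"
          using KJ by (intro compm) auto
        then show "(\<lambda>x. fst x b) \<in> borel_measurable (PiM K (\<lambda>_. M) \<Otimes>\<^sub>M M)" by measurable
      qed
      show ?thesis
        apply (rule integrable_const_bound[where B=1])
        using AEK apply eventually_elim
        using H01 apply fastforce
        by measurable
    qed
    show ?thesis
      using product_integral_insert[OF KJ(3,2), of "\<lambda>x. H (P x) (x b)"] intK KJ(1) by simp
  qed
  also have "\<dots> = (\<integral>v. (\<integral>z. (\<integral>y. gft (P v) y z \<partial>M) \<partial>M) \<partial>PiM (I - {a,b}) (\<lambda>_. M))"
    by (simp add: Pb H_def J_def)
  finally show ?thesis .
qed

lemma hist_dep: "(\<And>j. j < 2 * s \<Longrightarrow> v j = u j) \<Longrightarrow> hist alg w v s = hist alg w u s"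
proof (induction s)
  case 0 then show ?case by simp
next
  case (Suc s)
  have "hist alg w v s = hist alg w u s" using Suc by simp
  moreover have "v (2 * s) = u (2 * s)" "v (2 * s + 1) = u (2 * s + 1)" using Suc.prems by auto
  ultimately show ?case by (simp add: Let_def)
qed

lemma hist_meas:
  fixes N :: "real measure"
  assumes N: "sets N = sets borel" and K: "\<And>j. j < 2 * s \<Longrightarrow> j \<in> K"
  shows "(\<lambda>v. hist alg w v s) \<in> PiM K (\<lambda>_. N) \<rightarrow>\<^sub>M count_space UNIV"
  using K
proof (induction s)
  case 0
  then show ?case by simp
next
  case (Suc s)
  have compm: "(\<lambda>x. x j) \<in> borel_measurable (PiM K (\<lambda>_. N))" if "j \<in> K" for j
  proof -
    have "(\<lambda>x. x j) \<in> PiM K (\<lambda>_. N) \<rightarrow>\<^sub>M N" using that by (rule measurable_component_singleton)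
    then show ?thesis by (simp add: measurable_cong_sets[OF refl N])
  qed
  have c1[measurable]: "(\<lambda>x. x (2 * s)) \<in> borel_measurable (PiM K (\<lambda>_. N))"
    using Suc.prems by (intro compm) auto
  have c2[measurable]: "(\<lambda>x. x (2 * s+1)) \<in> borel_measurable (PiM K (\<lambda>_. N))"
    using Suc.prems by (intro compm) auto
  have IH: "(\<lambda>v. hist alg w v s) \<in> PiM K (\<lambda>_. N) \<rightarrow>\<^sub>M count_space UNIV"
    using Suc by auto
  have p1: "(\<lambda>v. A \<le> v (2 * s)) \<in> PiM K (\<lambda>_. N) \<rightarrow>\<^sub>M count_space UNIV" for A :: real
  proof -
    have "Measurable.pred (PiM K (\<lambda>_. N)) (\<lambda>v. A \<le> v (2 * s))" by measurable
    then show ?thesis .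
  qed
  have p2: "(\<lambda>v. A \<le> v (2 * s+1)) \<in> PiM K (\<lambda>_. N) \<rightarrow>\<^sub>M count_space UNIV" for A :: real
  proof -
    have "Measurable.pred (PiM K (\<lambda>_. N)) (\<lambda>v. A \<le> v (2 * s+1))" by measurable
    then show ?thesis .
  qed
  have f: "(\<lambda>v. l @ [(A \<le> v (2 * s), A \<le> v (2 * s+1))]) \<in> PiM K (\<lambda>_. N) \<rightarrow>\<^sub>M count_space UNIV" for l and A :: real
  proof -
    have "(\<lambda>v. l @ [(b, A \<le> v (2 * s+1))]) \<in> PiM K (\<lambda>_. N) \<rightarrow>\<^sub>M count_space UNIV" for b
      by (rule measurable_compose_countable[where f="\<lambda>b2 v. l @ [(b, b2)]", OF _ p2]) simp
    then show ?thesis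
      by (rule measurable_compose_countable[where f="\<lambda>b v. l @ [(b, A \<le> v (2 * s+1))]", OF _ p1])
  qed
  show ?case
    using measurable_compose_countable[where f="\<lambda>l v. l @ [(alg w l \<le> v (2 * s), alg w l \<le> v (2 * s+1))]", OF f IH]
    by (simp add: Let_def)
qed
lemma price_meas:
  fixes N :: "real measure"
  assumes N: "sets N = sets borel" and K: "\<And>j. j < 2 * s \<Longrightarrow> j \<in> K"
  shows "(\<lambda>v. price alg w v s) \<in> borel_measurable (PiM K (\<lambda>_. N))"
  unfolding price_def
  by (rule measurable_compose_countable[where f="\<lambda>l v. alg w l", OF _ hist_meas[OF N K]]) simp


definition nuq :: "real \<Rightarrow> real pmf" where "nuq c = pmf_of_multiset {#0, c, c, 1#}"
definition nu :: "real \<Rightarrow> real measure" where "nu c = distr (measure_pmf (nuq c)) borel (\<lambda>x. x)"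

lemma nu_sets: "sets (nu c) = sets borel"
  unfolding nu_def by simp

lemma nu_prob: "prob_space (nu c)"
  unfolding nu_def by (rule prob_space.prob_space_distr) (auto simp: prob_space_measure_pmf)

lemma nu_AE: assumes "0 \<le> c" "c \<le> 1" shows "AE x in nu c. x \<in> {0..1}"
  unfolding nu_def using assms
  by (subst AE_distr_iff) (auto simp: AE_measure_pmf_iff nuq_def)

lemma nu_measure: assumes "0 \<le> c" "c \<le> 1" shows "measure (nu c) {0..1} = 1"
proof -
  interpret prob_space "nu c" by (rule nu_prob)
  show ?thesis using prob_eq_1[of "{0..1}"] nu_AE[OF assms] by (simp add: nu_sets)
qed

lemma int_nu:
  fixes f :: "real \<Rightarrow> real"
  assumes "0 < c" "c < 1" and f: "f \<in> borel_measurable borel"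
  shows "(\<integral>x. f x \<partial>nu c) = (f 0 + 2 * f c + f 1) / 4"
proof -
  have "(\<integral>x. f x \<partial>nu c) = (\<integral>x. f x \<partial>measure_pmf (nuq c))"
    unfolding nu_def using integral_distr[of "\<lambda>x. x" "measure_pmf (nuq c)" borel f] f by simp
  also have "\<dots> = (\<Sum>a\<in>{0,c,1}. f a * pmf (nuq c) a)"
    by (rule integral_measure_pmf_real) (auto simp: nuq_def)
  also have "\<dots> = (f 0 + 2 * f c + f 1) / 4"
    using assms by (simp add: nuq_def)
  finally show ?thesis .
qed

definition G :: "real \<Rightarrow> real \<Rightarrow> real" where
  "G c p = (\<integral>z. (\<integral>y. gft p y z \<partial>nu c) \<partial>nu c)"

lemma G_val:
  assumes "0 < c" "c < 1" "p \<in> {0..1}"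
  shows "G c p = (if p = c then 3/8 else if p < c then (4*c+2)/16 else (4*(1-c)+2)/16)"
proof -
  have inner: "(\<integral>y. gft p y z \<partial>nu c) = (gft p 0 z + 2 * gft p c z + gft p 1 z) / 4" for z
    using assms by (intro int_nu) auto
  have "G c p = (\<integral>z. (gft p 0 z + 2 * gft p c z + gft p 1 z) / 4 \<partial>nu c)"
    unfolding G_def inner ..
  also have "\<dots> = ((gft p 0 0 + 2 * gft p c 0 + gft p 1 0) / 4 + 2 * ((gft p 0 c + 2 * gft p c c + gft p 1 c) / 4)
      + (gft p 0 1 + 2 * gft p c 1 + gft p 1 1) / 4) / 4"
    using assms by (intro int_nu) auto
  also have "\<dots> = (if p = c then 3/8 else if p < c then (4*c+2)/16 else (4*(1-c)+2)/16)"
    using assms by (auto simp: gft_def field_simps)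
  finally show ?thesis .
qed


lemma prob_int_le2:
  fixes f :: "'a \<Rightarrow> real"
  assumes "prob_space M" "\<And>x. x \<in> space M \<Longrightarrow> f x \<le> B" "0 \<le> B"
  shows "(\<integral>x. f x \<partial>M) \<le> B"
proof (cases "integrable M f")
  case True
  then show ?thesis using assms by (intro prob_int_le) (auto intro: AE_I2)
next
  case False then show ?thesis using assms by (simp add: not_integrable_integral_eq)
qed

lemma term_integrable:
  fixes M :: "real measure" and P :: "(nat \<Rightarrow> real) \<Rightarrow> real"
  assumes M: "prob_space M" "sets M = sets borel" "AE x in M. x \<in> {0..1}"
   and I: "finite I" "a \<in> I" "b \<in> I"
   and Pm: "P \<in> borel_measurable (PiM I (\<lambda>_. M))"
  shows "integrable (PiM I (\<lambda>_. M)) (\<lambda>v. gft (P v) (v a) (v b))"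
proof -
  have compm: "(\<lambda>x. x j) \<in> borel_measurable (PiM L (\<lambda>_. M))" if "j \<in> L" for j L
  proof -
    have "(\<lambda>x. x j) \<in> PiM L (\<lambda>_. M) \<rightarrow>\<^sub>M M" using that by (rule measurable_component_singleton)
    then show ?thesis by (simp add: measurable_cong_sets[OF refl M(2)])
  qed
  have AEI: "AE v in PiM I (\<lambda>_. M). v a \<in> {0..1} \<and> v b \<in> {0..1}"
    using I by (intro AE_conjI AE_PiM_component M) auto
  interpret prob_space "PiM I (\<lambda>_. M)" by (auto intro!: prob_space_PiM M)
  show ?thesis
    apply (rule integrable_const_bound[where B=1])
    using AEI apply eventually_elim
    using gft_bound apply fastforce
    using I by (intro gft_measurable Pm compm) auto
qed

theorem theorem5p4:
  fixes T :: nat and \<Omega> :: "'w measure" and alg :: "'w \<Rightarrow> (bool \<times> bool) list \<Rightarrow> real"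
  assumes "prob_space \<Omega>"
    and "\<And>h. (\<lambda>w. alg w h) \<in> borel_measurable \<Omega>"
    and "\<And>w h. alg w h \<in> {0..1}"
  shows "(SUP \<nu>\<in>dists01. regret T \<nu> \<Omega> alg) \<ge> ereal (real T / 9)"
proof -
  interpret O: prob_space \<Omega> by fact
  define S where "S = (\<Union>h::(bool\<times>bool) list. {x. measure (distr \<Omega> borel (\<lambda>w. alg w h)) {x} \<noteq> 0})"
  have "countable S"
    unfolding S_def
  proof (intro countable_UN[OF countableI_type])
    fix h :: "(bool\<times>bool) list"
    interpret D: prob_space "distr \<Omega> borel (\<lambda>w. alg w h)"
      by (rule O.prob_space_distr) (rule assms(2))
    show "countable {x. measure (distr \<Omega> borel (\<lambda>w. alg w h)) {x} \<noteq> 0}"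
      by (rule D.countable_support)
  qed
  moreover have "uncountable {4/9..5/9::real}" by (simp add: uncountable_closed_interval)
  ultimately obtain c where c: "c \<in> {4/9..5/9}" "c \<notin> S"
    by (metis countable_subset subsetI)
  have c01: "0 < c" "c < 1" using c by auto
  have AEw: "AE w in \<Omega>. \<forall>h. alg w h \<noteq> c"
  proof (subst AE_all_countable, intro allI)
    fix h :: "(bool\<times>bool) list"
    have "measure (distr \<Omega> borel (\<lambda>w. alg w h)) {c} = 0" using c(2) unfolding S_def by auto
    then have m0: "measure \<Omega> {w \<in> space \<Omega>. alg w h = c} = 0"
      using assms(2) by (subst (asm) measure_distr) (auto simp: vimage_def Int_def conj_commute)
    have sets: "{w \<in> space \<Omega>. alg w h = c} \<in> sets \<Omega>" using assms(2) by measurable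
    show "AE w in \<Omega>. alg w h \<noteq> c"
      using m0 sets by (subst AE_iff_measurable[OF sets]) (auto simp: O.emeasure_eq_measure)
  qed
  define \<nu> where "\<nu> = nu c"
  have \<nu>: "prob_space \<nu>" "sets \<nu> = sets borel" "AE x in \<nu>. x \<in> {0..1}"
    unfolding \<nu>_def using nu_prob nu_sets nu_AE[of c] c01 by auto
  have \<nu>d: "\<nu> \<in> dists01"
    using \<nu> nu_measure c01 by (auto simp: dists01_def \<nu>_def)
  define I where "I = {..<2 * T}"
  have finI: "finite I" by (simp add: I_def)
  have abI: "2 * s \<in> I" "2 * s + 1 \<in> I" if "s < T" for s using that by (auto simp: I_def)
  have VI: "vals T \<nu> = PiM I (\<lambda>_. \<nu>)" by (simp add: vals_def I_def)
  have psJ: "prob_space (PiM L (\<lambda>_. \<nu>))" for L by (auto intro!: prob_space_PiM \<nu>)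
  have Gnu: "(\<integral>z. (\<integral>y. gft p y z \<partial>\<nu>) \<partial>\<nu>) = G c p" for p by (simp add: G_def \<nu>_def)
  have fixed: "fixed_reward T \<nu> c = real T * (3/8)"
  proof -
    have "fixed_reward T \<nu> c = (\<Sum>s<T. (\<integral>v. gft c (v (2 * s)) (v (2 * s + 1)) \<partial>PiM I (\<lambda>_. \<nu>)))"
      unfolding fixed_reward_def VI
      by (rule Bochner_Integration.integral_sum[where f="\<lambda>s v. gft c (v (2 * s)) (v (2 * s + 1))"])
        (intro term_integrable[OF \<nu> finI] abI; simp)
    also have "\<dots> = (\<Sum>s<T. (3/8::real))"
    proof (rule sum.cong[OF refl])
      fix s assume s: "s \<in> {..<T}"
      have "(\<integral>v. gft ((\<lambda>_. c) v) (v (2 * s)) (v (2 * s + 1)) \<partial>PiM I (\<lambda>_. \<nu>))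
         = (\<integral>v. (\<integral>z. (\<integral>y. gft ((\<lambda>_. c) v) y z \<partial>\<nu>) \<partial>\<nu>) \<partial>PiM (I - {2 * s, 2 * s + 1}) (\<lambda>_. \<nu>))"
        using s by (intro indep_round[OF \<nu> finI] abI) auto
      also have "\<dots> = G c c" by (simp add: Gnu prob_space.prob_space[OF psJ])
      also have "\<dots> = 3/8" using G_val[OF c01, of c] c01 by simp
      finally show "(\<integral>v. gft c (v (2 * s)) (v (2 * s + 1)) \<partial>PiM I (\<lambda>_. \<nu>)) = 3/8" by simp
    qed
    finally show ?thesis by simp
  qed
  define gain where "gain w v = (\<Sum>s<T. gft (price alg w v s) (v (2 * s)) (v (2 * s + 1)))" for w v
  have pm: "(\<lambda>v. price alg w v s) \<in> borel_measurable (PiM L (\<lambda>_. \<nu>))" if "\<And>j. j < 2 * s \<Longrightarrow> j \<in> L" for w s L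
    using price_meas[OF \<nu>(2) that] .
  have inner: "(\<integral>v. gain w v \<partial>vals T \<nu>) \<le> real T * (19/72)" if w: "\<forall>h. alg w h \<noteq> c" for w
  proof -
    have "(\<integral>v. gain w v \<partial>vals T \<nu>) = (\<Sum>s<T. (\<integral>v. gft (price alg w v s) (v (2 * s)) (v (2 * s + 1)) \<partial>PiM I (\<lambda>_. \<nu>)))"
      unfolding gain_def VI
      by (rule Bochner_Integration.integral_sum[where f="\<lambda>s v. gft (price alg w v s) (v (2 * s)) (v (2 * s + 1))"])
        (intro term_integrable[OF \<nu> finI] abI pm; auto simp: I_def)
    also have "\<dots> \<le> (\<Sum>s<T. (19/72::real))"
    proof (rule sum_mono)
      fix s assume s: "s \<in> {..<T}"
      have "(\<integral>v. gft (price alg w v s) (v (2 * s)) (v (2 * s + 1)) \<partial>PiM I (\<lambda>_. \<nu>))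
         = (\<integral>v. (\<integral>z. (\<integral>y. gft (price alg w v s) y z \<partial>\<nu>) \<partial>\<nu>) \<partial>PiM (I - {2 * s, 2 * s + 1}) (\<lambda>_. \<nu>))"
      proof (rule indep_round[OF \<nu> finI abI])
        show "s < T" "s < T" using s by auto
        show "2 * s \<noteq> 2 * s + 1" by simp
        show "(\<lambda>v. price alg w v s) \<in> borel_measurable (PiM K (\<lambda>_. \<nu>))"
          if "I - {2 * s, 2 * s + 1} \<subseteq> K" for K
          using that s by (intro pm) (auto simp: I_def)
        show "price alg w (x(2 * s := y)) s = price alg w x s" for x y
          unfolding price_def by (subst hist_dep[where u=x]) auto
        show "price alg w (x(2 * s + 1 := y)) s = price alg w x s" for x y
          unfolding price_def by (subst hist_dep[where u=x]) auto
      qed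
      also have "\<dots> \<le> 19/72"
      proof (rule prob_int_le2[OF psJ])
        fix v
        have p: "price alg w v s \<in> {0..1}" "price alg w v s \<noteq> c"
          using assms(3) w by (auto simp: price_def)
        show "(\<integral>z. (\<integral>y. gft (price alg w v s) y z \<partial>\<nu>) \<partial>\<nu>) \<le> 19/72"
          unfolding Gnu G_val[OF c01 p(1)] using p c by (auto simp: field_simps)
      qed simp
      finally show "(\<integral>v. gft (price alg w v s) (v (2 * s)) (v (2 * s + 1)) \<partial>PiM I (\<lambda>_. \<nu>)) \<le> 19/72" .
    qed
    finally show ?thesis by simp
  qed
  have algr: "alg_reward T \<nu> \<Omega> alg \<le> real T * (19/72)"
  proof (cases "integrable (\<Omega> \<Otimes>\<^sub>M vals T \<nu>) (\<lambda>wv. gain (fst wv) (snd wv))")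
    case True
    interpret V: prob_space "vals T \<nu>" unfolding VI by (rule psJ)
    interpret pair_sigma_finite \<Omega> "vals T \<nu>" by unfold_locales
    have "alg_reward T \<nu> \<Omega> alg = (\<integral>w. (\<integral>v. gain w v \<partial>vals T \<nu>) \<partial>\<Omega>)"
      unfolding alg_reward_def gain_def[symmetric]
      using integral_fst'[OF True] by simp
    also have "\<dots> \<le> real T * (19/72)"
      using integrable_fst'[OF True] AEw inner
      by (intro prob_int_le[OF assms(1)]) (auto elim!: eventually_mono)
    finally show ?thesis .
  next
    case False
    then show ?thesis
      unfolding alg_reward_def gain_def[symmetric] by (simp add: not_integrable_integral_eq)
  qed
  have "ereal (real T * (3/8)) \<le> (SUP p\<in>{0..1}. ereal (fixed_reward T \<nu> p))"
    using c01 fixed by (intro SUP_upper2[of c]) auto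
  then have "ereal (real T * (3/8)) - ereal (alg_reward T \<nu> \<Omega> alg) \<le> regret T \<nu> \<Omega> alg"
    unfolding regret_def by (intro ereal_minus_mono) auto
  moreover have "ereal (real T / 9) \<le> ereal (real T * (3/8)) - ereal (alg_reward T \<nu> \<Omega> alg)"
    using algr by simp
  ultimately have "ereal (real T / 9) \<le> regret T \<nu> \<Omega> alg" by (rule order_trans[rotated])
  then show ?thesis using \<nu>d by (intro SUP_upper2[of \<nu>])
qed

end
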